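(* Let $A \subset \mathbb{R}$ be finite, let $K>0$, and suppose that $E^{\times}(A) \geq \frac{|A|^3}{K}$. Then there is a subset $A'\subseteq A$ and a number $\Delta \gg |A|/K$ such that $$|A'|\gtrsim\frac{|A|^2}{K\Delta}\qquad\text{and}\qquad d_*(A')\lesssim \frac{K|A'|^2}{|A|\Delta}.$$
   Context: $E^{\times}(A)$ is the number of solutions of $a_1/b_1=a_2/b_2$ with $a_i,b_i\in A$. For finite $A\subset\mathbb{R}$, define $$d_*(A)=\min_{t>0}\ \min_{Q,R} \frac{|Q|^2|R|^2}{|A|t^3},$$ where the inner minimum is over nonempty finite sets $Q,R\subset\mathbb{R}\setminus\{0\}$ with $\max\{|Q|,|R|\}\ge |A|$ such that $|Q\cap aR^{-1}|\ge t$ for every $a\in A$ (here $aR^{-1}=\{a/r: r\in R\}$). Notation: $X\ll Y$ / $Y\gg X$ means $X\le cY$ for an absolute constant $c>0$; $X\gtrsim Y$ (equivalently $Y\lesssim X$) means there is an absolute constant $c>0$ with $X\gg Y/(\log X)^c$, i.e. constant and logarithmic factors are suppressed. Logarithms are base 2. *)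

theory Defs
  imports Complex_Main
begin

definition mult_energy :: "real set \<Rightarrow> nat" where
  "mult_energy A = card {(a1, b1, a2, b2). a1 \<in> A \<and> b1 \<in> A \<and> a2 \<in> A \<and> b2 \<in> A \<and>
      b1 \<noteq> 0 \<and> b2 \<noteq> 0 \<and> a1 / b1 = a2 / b2}"

definition dil_inv :: "real \<Rightarrow> real set \<Rightarrow> real set" where
  "dil_inv a R = (\<lambda>r. a / r) ` R"

definition d_star :: "real set \<Rightarrow> real" where
  "d_star A = Inf {real (card Q) ^ 2 * real (card R) ^ 2 / (real (card A) * t ^ 3) | t Q R.
      t > 0 \<and> finite Q \<and> finite R \<and> Q \<noteq> {} \<and> R \<noteq> {} \<and> 0 \<notin> Q \<and> 0 \<notin> R \<and>
      max (card Q) (card R) \<ge> card A \<and>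
      (\<forall>a\<in>A. real (card (Q \<inter> dil_inv a R)) \<ge> t)}"

end

theory Submission
  imports Defs
begin


lemma dyadic_ph:
  fixes S :: "'a set" and w :: "'a \<Rightarrow> real" and N :: real and p :: nat
  assumes fin: "finite S" and w1: "\<And>s. s\<in>S \<Longrightarrow> 1 \<le> w s" and wN: "\<And>s. s\<in>S \<Longrightarrow> w s \<le> N"
  shows "\<exists>l\<ge>1. (\<Sum>s\<in>S. w s ^ p) \<le> 2^p * log 2 (2*N) * l^p * real (card {s\<in>S. l \<le> w s})"
proof (cases "S = {}")
  case True thus ?thesis by (intro exI[of _ 1]) auto
next
  case False
  then obtain s0 where "s0 \<in> S" by blast
  hence N1: "1 \<le> N" using w1 wN by force
  define D where "D = nat \<lfloor>log 2 N\<rfloor> + 1"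
  define k where "k s = nat \<lfloor>log 2 (w s)\<rfloor>" for s
  define T where "T j = 2^p * ((2::real)^j) ^ p * real (card {s\<in>S. 2^j \<le> w s})" for j
  have lg0: "0 \<le> log 2 (w s)" if "s \<in> S" for s using w1[OF that] by simp
  have kf: "real (k s) = of_int \<lfloor>log 2 (w s)\<rfloor>" if "s \<in> S" for s
    using lg0[OF that] unfolding k_def by simp
  have k1: "2^(k s) \<le> w s" if "s \<in> S" for s
  proof -
    have "(2::real)^(k s) = 2 powr (real (k s))" by (simp add: powr_realpow)
    also have "\<dots> \<le> 2 powr (log 2 (w s))" using kf[OF that]
      by (intro powr_mono) (auto)
    also have "\<dots> = w s" using w1[OF that] by simp
    finally show ?thesis .
  qed
  have k2: "w s < 2^(k s + 1)" if "s \<in> S" for s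
  proof -
    have "w s = 2 powr (log 2 (w s))" using w1[OF that] by simp
    also have "\<dots> < 2 powr (real (k s) + 1)" using kf[OF that]
      by (intro powr_less_mono) linarith+
    also have "\<dots> = 2^(k s + 1)" by (simp add: powr_add powr_realpow[symmetric])
    finally show ?thesis .
  qed
  have k3: "k s < D" if "s \<in> S" for s
  proof -
    have "log 2 (w s) \<le> log 2 N" using w1[OF that] wN[OF that] by simp
    hence "\<lfloor>log 2 (w s)\<rfloor> \<le> \<lfloor>log 2 N\<rfloor>" by (rule floor_mono)
    thus ?thesis unfolding k_def D_def by linarith
  qed
  have "(\<Sum>s\<in>S. w s ^ p) \<le> (\<Sum>s\<in>S. ((2::real)^(k s + 1)) ^ p)"
  proof (rule sum_mono)
    fix s assume "s \<in> S"
    thus "w s ^ p \<le> ((2::real)^(k s + 1)) ^ p" using k2[of s] w1[of s]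
      by (intro power_mono) auto
  qed
  also have "\<dots> = (\<Sum>j\<in>{..<D}. \<Sum>s\<in>{s\<in>S. k s = j}. ((2::real)^(k s + 1)) ^ p)"
    by (rule sum.group[symmetric]) (use fin k3 in auto)
  also have "\<dots> = (\<Sum>j\<in>{..<D}. \<Sum>s\<in>{s\<in>S. k s = j}. ((2::real)^(j + 1)) ^ p)"
    by (intro sum.cong refl) auto
  also have "\<dots> \<le> (\<Sum>j\<in>{..<D}. T j)"
  proof (intro sum_mono)
    fix j assume "j \<in> {..<D}"
    have sub: "{s\<in>S. k s = j} \<subseteq> {s\<in>S. 2^j \<le> w s}" using k1 by auto
    have "(\<Sum>s\<in>{s\<in>S. k s = j}. ((2::real)^(j + 1)) ^ p) = real (card {s\<in>S. k s = j}) * (2^(j+1))^p"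
      by simp
    also have "\<dots> \<le> real (card {s\<in>S. 2^j \<le> w s}) * (2^(j+1))^p"
      by (intro mult_right_mono) (use card_mono[OF _ sub] fin in auto)
    also have "\<dots> = T j" unfolding T_def by (simp add: power_mult_distrib power_add)
    finally show "(\<Sum>s\<in>{s\<in>S. k s = j}. ((2::real)^(j + 1)) ^ p) \<le> T j" .
  qed
  also obtain j0 where j0: "j0 < D" "\<And>j. j < D \<Longrightarrow> T j \<le> T j0"
  proof -
    have "D > 0" unfolding D_def by simp
    hence ne: "T ` {..<D} \<noteq> {}" by auto
    have "Max (T ` {..<D}) \<in> T ` {..<D}" by (rule Max_in) (use ne in auto)
    then obtain j0 where "j0 < D" "T j0 = Max (T ` {..<D})" by auto
    thus ?thesis using that by (metis Max_ge finite_imageI finite_lessThan image_eqI lessThan_iff)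
  qed
  hence "(\<Sum>j\<in>{..<D}. T j) \<le> (\<Sum>j\<in>{..<D}. T j0)" by (intro sum_mono) auto
  also have "\<dots> = real D * T j0" by simp
  also have "\<dots> \<le> log 2 (2*N) * T j0"
  proof (intro mult_right_mono)
    have "real D = of_int \<lfloor>log 2 N\<rfloor> + 1" unfolding D_def using N1 by simp
    also have "\<dots> \<le> log 2 N + 1" by linarith
    also have "\<dots> = log 2 (2*N)" using N1 by (simp add: log_mult)
    finally show "real D \<le> log 2 (2*N)" .
    show "0 \<le> T j0" unfolding T_def by simp
  qed
  finally show ?thesis
    by (intro exI[of _ "2^j0"]) (auto simp: T_def mult_ac)
qed



lemma dstar_le:
  assumes "finite Q" "finite R" "Q \<noteq> {}" "R \<noteq> {}" "0 \<notin> Q" "0 \<notin> R"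
    "max (card Q) (card R) \<ge> card A" "t > 0" "\<forall>a\<in>A. real (card (Q \<inter> dil_inv a R)) \<ge> t"
  shows "d_star A \<le> real (card Q) ^ 2 * real (card R) ^ 2 / (real (card A) * t ^ 3)"
  unfolding d_star_def
proof (rule cInf_lower)
  show "real (card Q) ^ 2 * real (card R) ^ 2 / (real (card A) * t ^ 3) \<in> {real (card Q) ^ 2 * real (card R) ^ 2 / (real (card A) * t ^ 3) | t Q R.
      t > 0 \<and> finite Q \<and> finite R \<and> Q \<noteq> {} \<and> R \<noteq> {} \<and> 0 \<notin> Q \<and> 0 \<notin> R \<and>
      max (card Q) (card R) \<ge> card A \<and>
      (\<forall>a\<in>A. real (card (Q \<inter> dil_inv a R)) \<ge> t)}"
    using assms by blast
  show "bdd_below {real (card Q) ^ 2 * real (card R) ^ 2 / (real (card A) * t ^ 3) | t Q R.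
      t > 0 \<and> finite Q \<and> finite R \<and> Q \<noteq> {} \<and> R \<noteq> {} \<and> 0 \<notin> Q \<and> 0 \<notin> R \<and>
      max (card Q) (card R) \<ge> card A \<and>
      (\<forall>a\<in>A. real (card (Q \<inter> dil_inv a R)) \<ge> t)}"
    by (rule bdd_belowI[of _ 0]) auto
qed

lemma finish:
  fixes m n L D K :: real
  assumes "1 \<le> m" "m \<le> n" "1 \<le> L" "K > 0" "D > 0" "dA \<le> D"
    and key: "K^2 * m^3 * L^6 \<ge> (1/32)^2 * n^3 * D"
  shows "\<exists>\<Delta>. \<Delta> \<ge> (1/32) * n / K \<and> m \<ge> (1/32) * (n ^ 2 / (K * \<Delta>)) / L powr 6 \<and>
     dA \<le> (1 / (1/32)) * (K * m ^ 2 / (n * \<Delta>)) * L powr 6"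
proof -
  define c :: real where "c = 1/32"
  have c: "c > 0" unfolding c_def by simp
  have Lp: "L powr 6 = L^6" using assms(3) by (simp add: powr_realpow)
  have L6: "L^6 \<ge> 1" using assms(3) by simp
  define \<Delta> where "\<Delta> = K * m^2 * L^6 / (c * n * D)"
  have n0: "n > 0" using assms by linarith
  have Dp: "\<Delta> > 0" unfolding \<Delta>_def using assms c n0 by (intro divide_pos_pos mult_pos_pos) auto
  have key': "K^2 * m^3 * L^6 \<ge> c^2 * n^3 * D" using key unfolding c_def .
  have i3: "(1/c) * (K * m ^ 2 / (n * \<Delta>)) * L^6 = D"
    unfolding \<Delta>_def using assms c n0 by (simp add: field_simps)
  have i2: "c * (n ^ 2 / (K * \<Delta>)) / L^6 \<le> m"
  proof -
    have "c * (n ^ 2 / (K * \<Delta>)) / L^6 = c^2 * n^3 * D / (K^2 * m^2 * L^12)"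
      unfolding \<Delta>_def using assms c n0 by (simp add: field_simps power2_eq_square power3_eq_cube)
    also have "\<dots> \<le> K^2 * m^3 * L^6 / (K^2 * m^2 * L^12)"
      by (intro divide_right_mono key') (use assms in auto)
    also have "\<dots> = m / L^6" using assms by (simp add: field_simps power2_eq_square power3_eq_cube)
    also have "\<dots> \<le> m" using assms L6 by (simp add: divide_le_eq)
    finally show ?thesis .
  qed
  have i1: "c * n / K \<le> \<Delta>"
  proof -
    have "c^2 * n^2 * D * m \<le> c^2 * n^3 * D"
      using assms c by (simp add: power2_eq_square power3_eq_cube mult_left_mono)
    also have "\<dots> \<le> K^2 * m^3 * L^6" by (rule key')
    finally have h: "c^2 * n^2 * D * m \<le> K^2 * m^3 * L^6" .
    have "c^2 * n^2 * D \<le> K^2 * m^2 * L^6"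
      using h assms by (simp add: power2_eq_square power3_eq_cube)
    thus ?thesis unfolding \<Delta>_def using assms c n0
      by (simp add: field_simps power2_eq_square)
  qed
  show ?thesis
    by (rule exI[of _ \<Delta>]) (use i1 i2 i3 assms Lp in \<open>auto simp: c_def\<close>)
qed



lemma card_filter_sum: "finite P \<Longrightarrow> card {x\<in>P. Q x} = (\<Sum>x\<in>P. if Q x then 1 else 0::nat)"
  by (simp add: sum.If_cases Int_def conj_commute)

lemma energy_le:
  assumes fin: "finite A0" and z: "0 \<notin> A0"
  defines "X \<equiv> (\<lambda>(a,b). a/b) ` (A0 \<times> A0)"
  shows "mult_energy A0 \<le> (\<Sum>x\<in>X. card {b\<in>A0. x*b \<in> A0} ^ 2)"
proof -
  define G where "G x = {b\<in>A0. x*b \<in> A0}" for x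
  have finX: "finite X" unfolding X_def using fin by simp
  have sub: "{(a1, b1, a2, b2). a1 \<in> A0 \<and> b1 \<in> A0 \<and> a2 \<in> A0 \<and> b2 \<in> A0 \<and>
      b1 \<noteq> 0 \<and> b2 \<noteq> 0 \<and> a1 / b1 = a2 / b2}
    \<subseteq> (\<lambda>(x,b1,b2). (x*b1,b1,x*b2,b2)) ` (SIGMA x:X. G x \<times> G x)"
  proof
    fix q assume "q \<in> {(a1, b1, a2, b2). a1 \<in> A0 \<and> b1 \<in> A0 \<and> a2 \<in> A0 \<and> b2 \<in> A0 \<and>
      b1 \<noteq> 0 \<and> b2 \<noteq> 0 \<and> a1 / b1 = a2 / b2}"
    then obtain a1 b1 a2 b2 where q: "q = (a1,b1,a2,b2)" and h: "a1 \<in> A0" "b1 \<in> A0" "a2 \<in> A0" "b2 \<in> A0"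
      "b1 \<noteq> 0" "b2 \<noteq> 0" "a1 / b1 = a2 / b2" by auto
    have x: "a1/b1 \<in> X" unfolding X_def using h by force
    have e1: "a1/b1*b1 = a1" using h(5) by simp
    have e2: "a1/b1*b2 = a2" using h by (metis nonzero_eq_divide_eq times_divide_eq_left)
    show "q \<in> (\<lambda>(x,b1,b2). (x*b1,b1,x*b2,b2)) ` (SIGMA x:X. G x \<times> G x)"
      unfolding q
      by (rule image_eqI[of _ _ "(a1/b1, b1, b2)"]) (use x e1 e2 h in \<open>auto simp: G_def\<close>)
  qed
  have finS: "finite (SIGMA x:X. G x \<times> G x)" using finX fin by (auto simp: G_def)
  have "mult_energy A0 \<le> card ((\<lambda>(x,b1,b2). (x*b1,b1,x*b2,b2)) ` (SIGMA x:X. G x \<times> G x))"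
    unfolding mult_energy_def by (rule card_mono[OF finite_imageI[OF finS] sub])
  also have "\<dots> \<le> card (SIGMA x:X. G x \<times> G x)" by (rule card_image_le[OF finS])
  also have "\<dots> = (\<Sum>x\<in>X. card (G x \<times> G x))" by (rule card_SigmaI) (use finX fin in \<open>auto simp: G_def\<close>)
  also have "\<dots> = (\<Sum>x\<in>X. card (G x) ^ 2)" by (simp add: power2_eq_square card_cartesian_product)
  finally show ?thesis unfolding G_def .
qed

lemma core:
  assumes fin: "finite A0" and z: "0 \<notin> A0" and ne: "A0 \<noteq> {}"
  shows "\<exists>A' D. A' \<subseteq> A0 \<and> 1 \<le> card A' \<and> D > 0 \<and> d_star A' \<le> D \<and>
     real (mult_energy A0)^2 * D \<le> 256 * log 2 (2*real(card A0))^6 * real(card A0)^3 * real(card A')^3"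
proof -
  define N0 where "N0 = real (card A0)"
  define L where "L = log 2 (2*N0)"
  define E0 where "E0 = real (mult_energy A0)"
  define X where "X = (\<lambda>(a,b). a/b) ` (A0 \<times> A0)"
  define r where "r x = card {b\<in>A0. x*b \<in> A0}" for x
  have N01: "1 \<le> N0" unfolding N0_def using fin ne by (simp add: Suc_le_eq card_gt_0_iff)
  have L1: "1 \<le> L" unfolding L_def using N01 by simp
  have finX: "finite X" unfolding X_def using fin by simp
  have X0: "0 \<notin> X" unfolding X_def using z by auto
  have E0le: "E0 \<le> (\<Sum>x\<in>X. real (r x) ^ 2)"
    using energy_le[OF fin z] unfolding E0_def r_def X_def by (simp flip: of_nat_power of_nat_sum)
  have E0pos: "1 \<le> E0"
  proof -
    obtain a where a: "a \<in> A0" using ne by blast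
    have "(a,a,a,a) \<in> {(a1, b1, a2, b2). a1 \<in> A0 \<and> b1 \<in> A0 \<and> a2 \<in> A0 \<and> b2 \<in> A0 \<and>
      b1 \<noteq> 0 \<and> b2 \<noteq> 0 \<and> a1 / b1 = a2 / b2}" using a z by auto
    moreover have "finite {(a1, b1, a2, b2). a1 \<in> A0 \<and> b1 \<in> A0 \<and> a2 \<in> A0 \<and> b2 \<in> A0 \<and>
      b1 \<noteq> 0 \<and> b2 \<noteq> 0 \<and> a1 / b1 = a2 / b2}"
      by (rule finite_subset[of _ "A0 \<times> A0 \<times> A0 \<times> A0"]) (use fin in auto)
    ultimately have "mult_energy A0 \<noteq> 0" unfolding mult_energy_def by auto
    thus ?thesis unfolding E0_def by simp
  qed
  have r1: "1 \<le> real (r x)" if "x \<in> X" for x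
  proof -
    from that obtain a b where ab: "a \<in> A0" "b \<in> A0" "x = a/b" unfolding X_def by auto
    have "b \<in> {b\<in>A0. x*b \<in> A0}" using ab z by auto
    hence "card {b\<in>A0. x*b \<in> A0} \<noteq> 0" using fin by auto
    thus ?thesis unfolding r_def by simp
  qed
  have rN: "real (r x) \<le> N0" for x
    unfolding r_def N0_def by (simp add: card_mono fin)
  obtain lam where lam1: "lam \<ge> 1" and
    ph1: "(\<Sum>x\<in>X. real (r x) ^ 2) \<le> 2^2 * L * lam^2 * real (card {x\<in>X. lam \<le> real (r x)})"
    using dyadic_ph[of X "\<lambda>x. real (r x)" N0 2] finX r1 rN unfolding L_def by auto
  define P where "P = {x\<in>X. lam \<le> real (r x)}"
  define p where "p = real (card P)"
  have finP: "finite P" unfolding P_def using finX by simp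
  have P0: "0 \<notin> P" unfolding P_def using X0 by auto
  have h1: "E0 \<le> 4 * L * lam^2 * p" using E0le ph1 unfolding p_def P_def by simp
  define S1 where "S1 = (\<Sum>x\<in>P. real (r x))"
  have h2: "lam * p \<le> S1"
  proof -
    have "lam * p = (\<Sum>x\<in>P. lam)" unfolding p_def by simp
    also have "\<dots> \<le> S1" unfolding S1_def by (rule sum_mono) (auto simp: P_def)
    finally show ?thesis .
  qed
  define f where "f b = card {x\<in>P. x*b \<in> A0}" for b
  have sumf: "(\<Sum>b\<in>A0. real (f b)) = S1"
  proof -
    have "(\<Sum>b\<in>A0. f b) = (\<Sum>b\<in>A0. \<Sum>x\<in>P. if x*b \<in> A0 then 1 else 0)"
      unfolding f_def by (intro sum.cong refl card_filter_sum finP)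
    also have "\<dots> = (\<Sum>x\<in>P. \<Sum>b\<in>A0. if x*b \<in> A0 then 1 else 0)" by (rule sum.swap)
    also have "\<dots> = (\<Sum>x\<in>P. r x)"
      unfolding r_def by (intro sum.cong refl card_filter_sum[symmetric] fin)
    finally show ?thesis unfolding S1_def by (simp flip: of_nat_sum)
  qed
  have fN: "real (f b) \<le> N0" if "b \<in> A0" for b
  proof -
    have bz: "b \<noteq> 0" using that z by auto
    have "card {x\<in>P. x*b \<in> A0} = card ((\<lambda>x. x*b) ` {x\<in>P. x*b \<in> A0})"
      by (rule card_image[symmetric]) (use bz in \<open>auto simp: inj_on_def\<close>)
    also have "\<dots> \<le> card A0" by (rule card_mono[OF fin]) auto
    finally show ?thesis unfolding f_def N0_def by simp
  qed
  define S where "S = {b\<in>A0. 1 \<le> real (f b)}"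
  have finS: "finite S" unfolding S_def using fin by simp
  obtain tau where tau1: "tau \<ge> 1" and
    ph2: "(\<Sum>b\<in>S. real (f b) ^ 1) \<le> 2^1 * L * tau^1 * real (card {b\<in>S. tau \<le> real (f b)})"
    using dyadic_ph[OF finS, of "\<lambda>b. real (f b)" N0 1] fN unfolding L_def S_def by auto
  define A' where "A' = {b\<in>S. tau \<le> real (f b)}"
  define m where "m = real (card A')"
  have A'sub: "A' \<subseteq> A0" unfolding A'_def S_def by auto
  have sumS: "(\<Sum>b\<in>S. real (f b)) = S1"
  proof -
    have "(\<Sum>b\<in>S. real (f b)) = (\<Sum>b\<in>A0. real (f b))"
      by (rule sum.mono_neutral_left[OF fin]) (auto simp: S_def)
    thus ?thesis using sumf by simp
  qed
  have h3: "S1 \<le> 2 * L * tau * m" using ph2 sumS unfolding m_def A'_def by simp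
  have p_pos: "p > 0"
  proof (rule ccontr)
    assume "\<not> p > 0" hence "p = 0" unfolding p_def by simp
    thus False using h1 E0pos by simp
  qed
  have S1pos: "S1 > 0" using h2 p_pos lam1
    by (smt (verit, best) mult_pos_pos)
  have m_pos: "m > 0"
  proof (rule ccontr)
    assume "\<not> m > 0" hence "m = 0" unfolding m_def by simp
    thus False using h3 S1pos by simp
  qed
  have m1: "1 \<le> card A'" using m_pos unfolding m_def by simp
  have tauN: "tau \<le> N0"
  proof -
    from m1 obtain b where "b \<in> A'" by (metis card.empty card_ge_0_finite not_one_le_zero ex_in_conv)
    hence "tau \<le> real (f b)" "b \<in> A0" unfolding A'_def S_def by auto
    thus ?thesis using fN by force
  qed
  define R where "R = (\<lambda>x. 1/x) ` P"
  have cardR: "card R = card P" unfolding R_def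
    by (rule card_image) (auto simp: inj_on_def)
  have inter: "real (card (A0 \<inter> dil_inv a R)) \<ge> tau" if "a \<in> A'" for a
  proof -
    have a: "a \<in> A0" "tau \<le> real (f a)" using that unfolding A'_def S_def by auto
    have az: "a \<noteq> 0" using a z by auto
    have "card {x\<in>P. x*a \<in> A0} = card ((\<lambda>x. x*a) ` {x\<in>P. x*a \<in> A0})"
      by (rule card_image[symmetric]) (use az in \<open>auto simp: inj_on_def\<close>)
    also have "\<dots> \<le> card (A0 \<inter> dil_inv a R)"
    proof (rule card_mono)
      show "finite (A0 \<inter> dil_inv a R)" using fin by simp
      show "(\<lambda>x. x*a) ` {x\<in>P. x*a \<in> A0} \<subseteq> A0 \<inter> dil_inv a R"
        unfolding dil_inv_def R_def by (auto simp: image_image mult.commute)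
    qed
    finally show ?thesis using a unfolding f_def by linarith
  qed
  define D where "D = N0^2 * p^2 / (m * tau^3)"
  have Dpos: "D > 0" unfolding D_def using N01 p_pos m_pos tau1 by simp
  have dle: "d_star A' \<le> D"
  proof -
    have "d_star A' \<le> real (card A0) ^ 2 * real (card R) ^ 2 / (real (card A') * tau ^ 3)"
    proof (rule dstar_le)
      show "finite A0" "finite R" using fin finP unfolding R_def by auto
      show "A0 \<noteq> {}" by fact
      show "R \<noteq> {}" using p_pos unfolding R_def p_def by auto
      show "0 \<notin> A0" by fact
      show "0 \<notin> R" using P0 unfolding R_def by auto
      show "card A' \<le> max (card A0) (card R)" using card_mono[OF fin A'sub] by simp
      show "tau > 0" using tau1 by simp
      show "\<forall>a\<in>A'. tau \<le> real (card (A0 \<inter> dil_inv a R))" using inter by auto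
    qed
    thus ?thesis unfolding D_def N0_def p_def m_def cardR .
  qed
  have key: "E0^2 * p^2 \<le> 256 * L^6 * N0 * m^4 * tau^3"
  proof -
    have Lp: "L > 0" using L1 by simp
    have a: "S1 \<le> 2 * L * N0 * m"
      using h3 tauN Lp m_pos by (smt (verit) mult_left_mono mult_right_mono)
    have b: "S1^4 \<le> (2*L*tau*m)^3 * (2*L*N0*m)"
    proof -
      have "S1^4 = S1^3 * S1" by (simp add: power_def)
      also have "\<dots> \<le> (2*L*tau*m)^3 * (2*L*N0*m)"
        by (intro mult_mono power_mono h3 a) (use S1pos Lp m_pos tau1 in auto)
      finally show ?thesis .
    qed
    have c: "(lam*p)^4 \<le> S1^4" by (intro power_mono h2) (use lam1 p_pos in auto)
    have d: "E0^2 * p^2 \<le> (4*L*lam^2*p)^2 * p^2"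
      by (intro mult_right_mono power_mono h1) (use E0pos in auto)
    have "(4*L*lam^2*p)^2 * p^2 = 16 * L^2 * (lam*p)^4" by (simp add: power_mult_distrib power2_eq_square power_def)
    also have "\<dots> \<le> 16 * L^2 * ((2*L*tau*m)^3 * (2*L*N0*m))"
      using b c Lp by (intro mult_left_mono) auto
    also have "\<dots> = 256 * L^6 * N0 * m^4 * tau^3" by (simp add: power_mult_distrib power_def)
    finally show ?thesis using d by linarith
  qed
  have "E0^2 * D \<le> 256 * L^6 * N0^3 * m^3"
  proof -
    have "E0^2 * D = E0^2 * p^2 * N0^2 / (m * tau^3)" unfolding D_def by simp
    also have "\<dots> \<le> 256 * L^6 * N0 * m^4 * tau^3 * N0^2 / (m * tau^3)"
      by (intro divide_right_mono mult_right_mono key) (use m_pos tau1 in auto)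
    also have "\<dots> = 256 * L^6 * N0^3 * m^3" using m_pos tau1
      by (simp add: field_simps power2_eq_square power3_eq_cube) (simp add: power_def)
    finally show ?thesis .
  qed
  thus ?thesis using A'sub m1 Dpos dle unfolding E0_def L_def N0_def m_def by blast
qed



lemma energy_split:
  assumes fin: "finite A"
  shows "mult_energy A \<le> mult_energy (A - {0}) + card (A - {0}) ^ 2"
proof -
  define A0 where "A0 = A - {0}"
  define M where "M B = {(a1, b1, a2, b2). a1 \<in> B \<and> b1 \<in> B \<and> a2 \<in> B \<and> b2 \<in> B \<and>
      b1 \<noteq> (0::real) \<and> b2 \<noteq> 0 \<and> a1 / b1 = a2 / b2}" for B
  have finA0: "finite A0" using fin unfolding A0_def by simp
  have finM: "finite (M A0)"
    by (rule finite_subset[of _ "A0 \<times> A0 \<times> A0 \<times> A0"]) (use finA0 in \<open>auto simp: M_def\<close>)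
  have sub: "M A \<subseteq> M A0 \<union> (\<lambda>(b1,b2). (0,b1,0,b2)) ` (A0 \<times> A0)"
  proof
    fix q assume "q \<in> M A"
    then obtain a1 b1 a2 b2 where q: "q = (a1,b1,a2,b2)" and h: "a1 \<in> A" "b1 \<in> A" "a2 \<in> A" "b2 \<in> A"
      "b1 \<noteq> 0" "b2 \<noteq> 0" "a1 / b1 = a2 / b2" unfolding M_def by auto
    show "q \<in> M A0 \<union> (\<lambda>(b1,b2). (0,b1,0,b2)) ` (A0 \<times> A0)"
    proof (cases "a1 = 0")
      case True
      hence "a2 = 0" using h by (metis divide_eq_0_iff)
      thus ?thesis using True h unfolding q A0_def by auto
    next
      case False
      hence "a2 \<noteq> 0" using h by (metis divide_eq_0_iff)
      thus ?thesis using False h unfolding q A0_def M_def by auto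
    qed
  qed
  have "card (M A) \<le> card (M A0 \<union> (\<lambda>(b1,b2). (0,b1,0,b2)) ` (A0 \<times> A0))"
    by (rule card_mono[OF _ sub]) (use finM finA0 in auto)
  also have "\<dots> \<le> card (M A0) + card ((\<lambda>(b1,b2). (0::real,b1,0::real,b2)) ` (A0 \<times> A0))"
    by (rule card_Un_le)
  also have "card ((\<lambda>(b1,b2). (0::real,b1,0::real,b2)) ` (A0 \<times> A0)) \<le> card (A0 \<times> A0)"
    by (rule card_image_le) (use finA0 in auto)
  finally show ?thesis unfolding mult_energy_def M_def A0_def
    by (simp add: card_cartesian_product power2_eq_square)
qed

lemma main_claim:
  fixes A :: "real set" and K :: real
  assumes asm: "finite A \<and> K > 0 \<and> real (mult_energy A) \<ge> real (card A) ^ 3 / K"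
  shows "\<exists>A' \<Delta>. A' \<subseteq> A \<and> \<Delta> \<ge> (1/32) * real (card A) / K \<and>
          real (card A') \<ge> (1/32) * (real (card A) ^ 2 / (K * \<Delta>)) / (log 2 (2 * real (card A))) powr 6 \<and>
          d_star A' \<le> (1 / (1/32)) * (K * real (card A') ^ 2 / (real (card A) * \<Delta>)) * (log 2 (2 * real (card A))) powr 6"
proof -
  from asm have fin: "finite A" and Kp: "K > 0" and EA: "real (mult_energy A) \<ge> real (card A) ^ 3 / K" by auto
  define n where "n = real (card A)"
  define L where "L = log 2 (2*n)"
  show ?thesis
  proof (cases "A = {}")
    case True
    have "d_star {} \<le> real (card {(1::real)}) ^ 2 * real (card {(1::real)}) ^ 2 / (real (card ({}::real set)) * 1 ^ 3)"
      by (rule dstar_le) auto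
    hence "d_star {} \<le> 0" by simp
    thus ?thesis using True by (intro exI[of _ "{}"] exI[of _ 0]) auto
  next
    case False
    define A0 where "A0 = A - {0}"
    define N0 where "N0 = real (card A0)"
    have n1: "1 \<le> n" unfolding n_def using False fin by (simp add: Suc_le_eq card_gt_0_iff)
    have L1: "1 \<le> L" unfolding L_def using n1 by simp
    have finA0: "finite A0" unfolding A0_def using fin by simp
    have z: "0 \<notin> A0" unfolding A0_def by simp
    have N0n: "N0 \<le> n" unfolding N0_def n_def A0_def using fin by (simp add: card_mono)
    have Esplit: "real (mult_energy A) \<le> real (mult_energy A0) + N0^2"
      using energy_split[OF fin] unfolding A0_def N0_def by (simp flip: of_nat_power of_nat_add)
    have EAn: "n^3 / K \<le> real (mult_energy A)" using EA unfolding n_def .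
    have n3pos: "n^3/K > 0" using n1 Kp by simp
    have A0ne: "A0 \<noteq> {}"
    proof
      assume "A0 = {}"
      hence "mult_energy A0 = 0" "N0 = 0" unfolding mult_energy_def N0_def by (auto simp: card_eq_0_iff)
      thus False using Esplit EAn n3pos by simp
    qed
    have N01: "1 \<le> N0" unfolding N0_def using A0ne finA0 by (simp add: Suc_le_eq card_gt_0_iff)
    have "\<exists>A' D. A' \<subseteq> A \<and> 1 \<le> card A' \<and> D > 0 \<and> d_star A' \<le> D \<and> real (card A') \<le> n \<and>
           K^2 * real (card A')^3 * L^6 \<ge> (1/32)^2 * n^3 * D"
    proof (cases "real (mult_energy A0) \<ge> n^3/(2*K)")
      case True
      obtain A' D where A': "A' \<subseteq> A0" "1 \<le> card A'" "D > 0" "d_star A' \<le> D"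
        "real (mult_energy A0)^2 * D \<le> 256 * log 2 (2*real(card A0))^6 * real(card A0)^3 * real(card A')^3"
        using core[OF finA0 z A0ne] by blast
      define m where "m = real (card A')"
      define E0 where "E0 = real (mult_energy A0)"
      have mN: "m \<le> N0" unfolding m_def N0_def using card_mono[OF finA0 A'(1)] by simp
      have L0: "log 2 (2*N0) \<le> L" unfolding L_def using N01 N0n by simp
      have L0p: "0 \<le> log 2 (2*N0)" using N01 by simp
      have c1: "E0^2 * D \<le> 256 * L^6 * n^3 * m^3"
      proof -
        have "E0^2 * D \<le> 256 * log 2 (2*N0)^6 * N0^3 * m^3" using A'(5) unfolding E0_def N0_def m_def .
        also have "\<dots> \<le> 256 * L^6 * n^3 * m^3"
          by (intro mult_mono mult_left_mono power_mono L0 L0p N0n) (use N01 m_def n1 L1 in auto)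
        finally show ?thesis .
      qed
      have c2: "n^6 \<le> 4 * K^2 * E0^2"
      proof -
        have "n^3 \<le> 2*K*E0" using True Kp unfolding E0_def by (simp add: field_simps)
        hence "(n^3)^2 \<le> (2*K*E0)^2" by (intro power_mono) (use n1 in auto)
        thus ?thesis by (simp add: power_mult_distrib power2_eq_square mult_ac flip: power_add)
      qed
      have "n^6 * D \<le> 4 * K^2 * E0^2 * D" using c2 A'(3) by (intro mult_right_mono) auto
      also have "\<dots> \<le> 4 * K^2 * (256 * L^6 * n^3 * m^3)"
        using mult_left_mono[OF c1, of "4*K^2"] Kp by (simp add: mult.assoc)
      finally have "n^3 * (n^3 * D) \<le> n^3 * (1024 * K^2 * L^6 * m^3)"
        by (simp add: mult_ac flip: power_add)
      hence "n^3 * D \<le> 1024 * K^2 * L^6 * m^3" by (rule mult_left_le_imp_le) (use n1 in simp)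
      hence "K^2 * m^3 * L^6 \<ge> (1/32)^2 * n^3 * D" by (simp add: mult_ac power2_eq_square)
      thus ?thesis using A' mN N0n unfolding m_def A0_def by (intro exI[of _ A'] exI[of _ D]) auto
    next
      case False
      have bnd: "n^3 \<le> 2 * K * N0^2"
      proof -
        have a: "n^3 \<le> K * real (mult_energy A)" using EAn Kp by (simp add: field_simps)
        have b: "K * real (mult_energy A) \<le> K * real (mult_energy A0) + K * N0^2"
          using mult_left_mono[OF Esplit, of K] Kp by (simp add: distrib_left)
        have c: "2 * (K * real (mult_energy A0)) < n^3" using False Kp by (simp add: field_simps)
        show ?thesis using a b c by linarith
      qed
      have dle: "d_star A0 \<le> N0"
      proof -
        have "d_star A0 \<le> real (card A0) ^ 2 * real (card {(1::real)}) ^ 2 / (real (card A0) * 1 ^ 3)"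
        proof (rule dstar_le)
          show "\<forall>a\<in>A0. 1 \<le> real (card (A0 \<inter> dil_inv a {1}))"
          proof
            fix a assume "a \<in> A0"
            hence "A0 \<inter> dil_inv a {1} = {a}" unfolding dil_inv_def by auto
            thus "1 \<le> real (card (A0 \<inter> dil_inv a {1}))" by simp
          qed
        qed (use finA0 A0ne z in auto)
        thus ?thesis unfolding N0_def using N01 N0_def by (simp add: power2_eq_square)
      qed
      have "n^6 \<le> 4 * K^2 * N0^4"
      proof -
        have "(n^3)^2 \<le> (2*K*N0^2)^2" by (intro power_mono bnd) (use n1 in auto)
        thus ?thesis by (simp add: power_mult_distrib flip: power_mult)
      qed
      also have "\<dots> \<le> 4 * K^2 * (N0^2 * n^2)"
      proof (intro mult_left_mono)
        have "N0^2 \<le> n^2" by (intro power_mono N0n) (use N01 in auto)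
        hence "N0^2 * N0^2 \<le> N0^2 * n^2" by (intro mult_left_mono) auto
        thus "N0^4 \<le> N0^2 * n^2" by (simp flip: power_add)
      qed auto
      finally have "n^2 * n^4 \<le> n^2 * (4 * K^2 * N0^2)" by (simp add: mult_ac flip: power_add)
      hence n4: "n^4 \<le> 4 * K^2 * N0^2" by (rule mult_left_le_imp_le) (use n1 in simp)
      have "n^3 \<le> n^4" by (rule power_increasing) (use n1 in auto)
      hence "n^3 * N0 \<le> 4 * K^2 * N0^2 * N0" using n4 N01 by (intro mult_right_mono) auto
      also have "\<dots> \<le> 1024 * K^2 * N0^3 * L^6"
      proof -
        have X: "0 \<le> K^2 * N0^3" using N01 by simp
        have "L^6 \<ge> 1" using L1 by simp
        hence "4 * (K^2 * N0^3) \<le> 1024 * (K^2 * N0^3) * L^6"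
        proof -
          have "1024 * (K^2 * N0^3) * 1 \<le> 1024 * (K^2 * N0^3) * L^6"
            by (rule mult_left_mono) (use X \<open>L^6 \<ge> 1\<close> in auto)
          thus ?thesis using X by linarith
        qed
        thus ?thesis by (simp add: power2_eq_square power3_eq_cube mult_ac)
      qed
      finally have "K^2 * N0^3 * L^6 \<ge> (1/32)^2 * n^3 * N0" by (simp add: power2_eq_square mult_ac)
      moreover have "A0 \<subseteq> A" unfolding A0_def by auto
      moreover have "1 \<le> card A0" using N01 unfolding N0_def by simp
      moreover have "0 < N0" using N01 by simp
      ultimately show ?thesis using dle N0n unfolding N0_def
        by blast
    qed
    then obtain A' D where A': "A' \<subseteq> A" "1 \<le> card A'" "D > 0" "d_star A' \<le> D" "real (card A') \<le> n"
       "K^2 * real (card A')^3 * L^6 \<ge> (1/32)^2 * n^3 * D" by blast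
    obtain \<Delta> where "\<Delta> \<ge> (1/32) * n / K \<and> real (card A') \<ge> (1/32) * (n ^ 2 / (K * \<Delta>)) / L powr 6 \<and>
     d_star A' \<le> (1 / (1/32)) * (K * real (card A') ^ 2 / (n * \<Delta>)) * L powr 6"
      using finish[of "real (card A')" n L K D "d_star A'"] A' L1 Kp by auto
    thus ?thesis using A'(1) unfolding n_def L_def by blast
  qed
qed

theorem lemma6p4:
  "\<exists>c::real. \<exists>C::real. c > 0 \<and> C \<ge> 0 \<and>
    (\<forall>(A::real set) (K::real). finite A \<and> K > 0 \<and>
       real (mult_energy A) \<ge> real (card A) ^ 3 / K \<longrightarrow>
       (\<exists>A' \<Delta>. A' \<subseteq> A \<and> \<Delta> \<ge> c * real (card A) / K \<and>
          real (card A') \<ge> c * (real (card A) ^ 2 / (K * \<Delta>)) / (log 2 (2 * real (card A))) powr C \<and>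
          d_star A' \<le> (1 / c) * (K * real (card A') ^ 2 / (real (card A) * \<Delta>)) * (log 2 (2 * real (card A))) powr C))"
  apply (rule exI[of _ "1/32"], rule exI[of _ 6])
  using main_claim by auto

end
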